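(* For all integers $v\geq 1$ and $L\geq 0$, \[ \sum_{n_1,\ldots,n_v\geq 0} \frac{q^{\sum_{i=1}^v N_i(N_i+1)+n_v}}{(q)_{n_1}\cdots(q)_{n_{v-1}}(q)_{1+2n_v}}\,\frac{(-1;q^3)_{n_v}}{(-1;q)_{n_v}}\,\frac{(q)_{2L+1}}{(q)_{L-N_1}}\,(1+q-q^{1+n_v}) =\sum_{j=-\infty}^{\infty}\left(\frac{j}{3}\right) q^{\frac{(2v+1)j^2-(2v+3)j}{2}+1} {2L+1 \brack L+j}_q, \] where $N_i=n_i+n_{i+1}+\cdots+n_v$ for $i=1,\ldots,v$ (for $v=1$ the product $(q)_{n_1}\cdots(q)_{n_{v-1}}$ is empty).
   Context: For a variable $a$ and integer $n\ge 0$, $(a;q)_n=(1-a)(1-aq)\cdots(1-aq^{n-1})$, and $(q)_n=(q;q)_n$; by convention $1/(q)_n=0$ for negative integers $n$. The $q$-binomial coefficient is ${A \brack B}_q=\frac{(q;q)_A}{(q;q)_B(q;q)_{A-B}}$ if $0\le B\le A$ are integers, and $0$ otherwise. $\left(\frac{j}{3}\right)$ is the Legendre symbol modulo 3: it equals $1$ if $j\equiv 1 \pmod 3$, $-1$ if $j\equiv -1\pmod 3$, and $0$ if $3\mid j$. *)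

theory Defs
  imports "HOL-Analysis.Analysis" "HOL-Number_Theory.Number_Theory"
begin

definition qpoch :: "complex \<Rightarrow> complex \<Rightarrow> nat \<Rightarrow> complex" where
  "qpoch a q n = (\<Prod>k<n. (1 - a * q ^ k))"

definition qfact :: "complex \<Rightarrow> nat \<Rightarrow> complex" where
  "qfact q n = qpoch q q n"

definition inv_qfact :: "complex \<Rightarrow> int \<Rightarrow> complex" where
  "inv_qfact q m = (if m < 0 then 0 else 1 / qfact q (nat m))"

definition qbinom :: "complex \<Rightarrow> int \<Rightarrow> int \<Rightarrow> complex" where
  "qbinom q A B = (if 0 \<le> B \<and> B \<le> A
      then qfact q (nat A) / (qfact q (nat B) * qfact q (nat (A - B))) else 0)"

end

theory Submission
  imports Defs
begin

lemma qfact_0[simp]: "qfact q 0 = 1"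
  by (simp add: qfact_def qpoch_def)

lemma qfact_Suc: "qfact q (Suc n) = qfact q n * (1 - q ^ Suc n)"
  by (simp add: qfact_def qpoch_def)

lemma qfact_nz:
  assumes "norm q < 1" shows "qfact q n \<noteq> 0"
proof (induction n)
  case 0 then show ?case by simp
next
  case (Suc n)
  have a: "norm q ^ Suc n < 1"
    using power_less_one_iff[of "norm q" "Suc n"] assms by simp
  have "norm (q ^ Suc n) < 1"
    using a by (simp only: norm_power)
  then have "q ^ Suc n \<noteq> 1" by auto
  then show ?case using Suc by (simp add: qfact_Suc)
qed

lemma qbinom_out: "B < 0 \<or> B > A \<Longrightarrow> qbinom q A B = 0"
  by (auto simp: qbinom_def)

lemma qbinom_nat: "k \<le> n \<Longrightarrow> qbinom q (int n) (int k) = qfact q n / (qfact q k * qfact q (n - k))"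
  by (simp add: qbinom_def nat_diff_distrib)

lemma qbinom_0: "norm q < 1 \<Longrightarrow> A \<ge> 0 \<Longrightarrow> qbinom q A 0 = 1"
  by (simp add: qbinom_def qfact_nz)

lemma qbinom_diag: "norm q < 1 \<Longrightarrow> A \<ge> 0 \<Longrightarrow> qbinom q A A = 1"
  by (simp add: qbinom_def qfact_nz)

lemma pascal_alg:
  fixes X A B u w :: complex
  assumes "A \<noteq> 0" "B \<noteq> 0" "1 - u \<noteq> 0" "1 - w \<noteq> 0"
  shows "X * (1 - u * w) / (A * (1 - u) * (B * (1 - w))) = X / (A * (B * (1 - w))) + u * (X / (A * (1 - u) * B))"
proof -
  define a where "a = 1 - u"
  define b where "b = 1 - w"
  have u: "u = 1 - a" and w: "w = 1 - b" by (simp_all add: a_def b_def)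
  have "a \<noteq> 0" "b \<noteq> 0" using assms by (simp_all add: a_def b_def)
  then show ?thesis unfolding u w a_def[symmetric] b_def[symmetric]
    using assms(1,2) by (simp add: field_simps)
qed

lemma pascal_nat:
  assumes q: "norm q < 1"
  shows "qfact q (a+b+2) / (qfact q (a+1) * qfact q (b+1))
       = qfact q (a+b+1) / (qfact q a * qfact q (b+1))
       + q^(a+1) * (qfact q (a+b+1) / (qfact q (a+1) * qfact q b))"
proof -
  have nz: "\<And>n. qfact q n \<noteq> 0" using qfact_nz[OF q] .
  have e1: "qfact q (a+b+2) = qfact q (a+b+1) * (1 - q^(a+b+2))"
    using qfact_Suc[of q "a+b+1"] by simp
  have e2: "qfact q (a+1) = qfact q a * (1 - q^(a+1))"
    using qfact_Suc[of q a] by simp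
  have e3: "qfact q (b+1) = qfact q b * (1 - q^(b+1))"
    using qfact_Suc[of q b] by simp
  have f2: "1 - q^(a+1) \<noteq> 0" using nz e2 by force
  have f3: "1 - q^(b+1) \<noteq> 0" using nz e3 by force
  show ?thesis
    unfolding e1 e2 e3 using pascal_alg[OF nz nz f2 f3, of "qfact q (a+b+1)"]
    by (simp add: power_add mult.commute mult.left_commute)
qed

lemma pascal1:
  assumes q: "norm q < 1" and N: "N \<ge> 0"
  shows "qbinom q (N+1) k = qbinom q N (k-1) + q^(nat k) * qbinom q N k"
proof -
  consider "k < 0" | "k = 0" | "k \<ge> 1 \<and> k \<le> N" | "k = N+1" | "k > N+1" by linarith
  then show ?thesis
  proof cases
    case 3
    obtain a where a: "k = int a + 1" using 3 by (metis add.commute add_minus_cancel nonneg_int_cases zle_diff1_eq zle_iff_zadd) 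
    obtain b where b: "N = int a + int b + 1" using 3 a
      by (metis add.commute add.left_commute nonneg_int_cases zle_add1_eq_le zle_iff_zadd zless_add1_eq)
    have h1: "qbinom q (N+1) k = qfact q (a+b+2) / (qfact q (a+1) * qfact q (b+1))"
      using qbinom_nat[of "a+1" "a+b+2" q] a b by (simp add: add.commute add.left_commute)
    have h2: "qbinom q N (k-1) = qfact q (a+b+1) / (qfact q a * qfact q (b+1))"
      using qbinom_nat[of "a" "a+b+1" q] a b by (simp add: add.commute add.left_commute)
    have h3: "qbinom q N k = qfact q (a+b+1) / (qfact q (a+1) * qfact q b)"
      using qbinom_nat[of "a+1" "a+b+1" q] a b by (simp add: add.commute add.left_commute)
    have h4: "nat k = a + 1" using a by simp
    show ?thesis unfolding h1 h2 h3 h4 using pascal_nat[OF q] by simp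
  qed (use N q in \<open>auto simp: qbinom_out qbinom_0 qbinom_diag\<close>)
qed

lemma pascal2:
  assumes q: "norm q < 1" and N: "N \<ge> 0"
  shows "qbinom q (N+1) k = q^(nat (N+1-k)) * qbinom q N (k-1) + qbinom q N k"
proof -
  consider "k < 0" | "k = 0" | "k \<ge> 1 \<and> k \<le> N" | "k = N+1" | "k > N+1" by linarith
  then show ?thesis
  proof cases
    case 3
    obtain a where a: "k = int a + 1" using 3 by (metis add.commute add_minus_cancel nonneg_int_cases zle_diff1_eq zle_iff_zadd) 
    obtain b where b: "N = int a + int b + 1" using 3 a
      by (metis add.commute add.left_commute nonneg_int_cases zle_add1_eq_le zle_iff_zadd zless_add1_eq)
    have h1: "qbinom q (N+1) k = qfact q (b+a+2) / (qfact q (b+1) * qfact q (a+1))"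
      using qbinom_nat[of "a+1" "a+b+2" q] a b by (simp add: add.commute add.left_commute mult.commute)
    have h2: "qbinom q N (k-1) = qfact q (b+a+1) / (qfact q (b+1) * qfact q a)"
      using qbinom_nat[of "a" "a+b+1" q] a b by (simp add: add.commute add.left_commute mult.commute)
    have h3: "qbinom q N k = qfact q (b+a+1) / (qfact q b * qfact q (a+1))"
      using qbinom_nat[of "a+1" "a+b+1" q] a b by (simp add: add.commute add.left_commute mult.commute)
    have h4: "nat (N+1-k) = b + 1" using a b by simp
    show ?thesis unfolding h1 h2 h3 h4 using pascal_nat[OF q, of b a] by simp
  qed (use N q in \<open>auto simp: qbinom_out qbinom_0 qbinom_diag\<close>)
qed

definition chi :: "int \<Rightarrow> complex" where "chi j = of_int (Legendre j 3)"

lemma QuadRes3: "QuadRes 3 a \<longleftrightarrow> a mod 3 \<noteq> 2"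
proof
  assume "QuadRes 3 a"
  then obtain y where y: "[y^2 = a] (mod 3)" by (auto simp: QuadRes_def)
  then have "y^2 mod 3 = a mod 3" by (simp add: cong_def)
  moreover have "y^2 mod 3 = ((y mod 3)^2) mod 3" by (simp add: power_mod)
  moreover have "y mod 3 \<in> {0,1,2}" by auto
  ultimately show "a mod 3 \<noteq> 2" by (auto simp: power2_eq_square)
next
  assume a: "a mod 3 \<noteq> 2"
  have "a mod 3 \<in> {0,1,2}" by auto
  with a have "a mod 3 = 0 \<or> a mod 3 = 1" by auto
  then show "QuadRes 3 a"
  proof
    assume "a mod 3 = 0" then have "[0^2 = a] (mod 3)" by (simp add: cong_def)
    then show ?thesis unfolding QuadRes_def by blast
  next
    assume "a mod 3 = 1" then have "[1^2 = a] (mod 3)" by (simp add: cong_def)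
    then show ?thesis unfolding QuadRes_def by blast
  qed
qed

lemma chi_eq: "chi j = (if j mod 3 = 0 then 0 else if j mod 3 = 1 then 1 else -1)"
proof -
  have "[j = 0] (mod 3) \<longleftrightarrow> j mod 3 = 0" by (simp add: cong_def)
  moreover have "j mod 3 \<in> {0,1,2}" by auto
  ultimately show ?thesis unfolding chi_def Legendre_def QuadRes3 by auto
qed

definition tri :: "int \<Rightarrow> nat" where "tri j = nat (j * (j - 1) div 2)"

lemma tri_nonneg: "0 \<le> j * (j - 1) div 2" for j :: int
proof -
  have "0 \<le> j * (j - 1)" by (cases "j \<ge> 1") (auto simp: zero_le_mult_iff)
  then show ?thesis by simp
qed

lemma tri_int: "int (tri j) = j * (j - 1) div 2"
  using tri_nonneg[of j] by (simp add: tri_def)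

lemma tri_succ: "int (tri (j + 1)) = int (tri j) + j"
proof -
  have "(j + 1) * (j + 1 - 1) = j * (j - 1) + 2 * j" by (simp add: algebra_simps)
  then show ?thesis unfolding tri_int by simp
qed

lemma tri_0[simp]: "tri 0 = 0" by (simp add: tri_def)

lemma infsum_single:
  fixes f :: "int \<Rightarrow> complex"
  assumes "\<And>j. j \<noteq> a \<Longrightarrow> f j = 0"
  shows "infsum f UNIV = f a"
proof -
  have "infsum f UNIV = infsum f {a}"
    by (rule infsum_cong_neutral) (use assms in auto)
  then show ?thesis by simp
qed

lemma summ:
  fixes f :: "int \<Rightarrow> complex"
  assumes "\<And>j. j < lo \<or> j > hi \<Longrightarrow> f j = 0"
  shows "f summable_on UNIV"
proof (rule finite_nonzero_values_imp_summable_on)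
  have "{x \<in> UNIV. f x \<noteq> 0} \<subseteq> {lo..hi}" using assms by force
  then show "finite {x \<in> UNIV. f x \<noteq> 0}" by (rule finite_subset) simp
qed

lemma infsum_shift:
  fixes f :: "int \<Rightarrow> complex"
  shows "infsum (\<lambda>j. f (j + c)) UNIV = infsum f UNIV"
  by (rule infsum_reindex_bij_witness[of UNIV "\<lambda>j. j - c" "\<lambda>j. j + c"]) auto

lemma infsum_split:
  fixes f g h :: "int \<Rightarrow> complex"
  assumes "\<And>j. f j = g j + c * h (j + d)"
    and "\<And>j. j < lo \<or> j > hi \<Longrightarrow> g j = 0"
    and "\<And>j. j < lo \<or> j > hi \<Longrightarrow> h j = 0"
  shows "infsum f UNIV = infsum g UNIV + c * infsum h UNIV"
proof -
  have s1: "g summable_on UNIV" using summ[of lo hi g] assms(2) by blast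
  have s2: "(\<lambda>j. c * h (j + d)) summable_on UNIV"
    by (rule summ[of "lo - d" "hi - d"]) (use assms(3) in force)
  have s3: "(\<lambda>j. h (j + d)) summable_on UNIV"
    by (rule summ[of "lo - d" "hi - d"]) (use assms(3) in force)
  have "infsum f UNIV = infsum (\<lambda>j. g j + c * h (j + d)) UNIV" using assms(1) by presburger
  also have "\<dots> = infsum g UNIV + infsum (\<lambda>j. c * h (j + d)) UNIV"
    by (rule infsum_add[OF s1 s2])
  also have "infsum (\<lambda>j. c * h (j + d)) UNIV = c * infsum (\<lambda>j. h (j + d)) UNIV"
    by (rule infsum_cmult_right) (use s3 in auto)
  also have "infsum (\<lambda>j. h (j + d)) UNIV = infsum h UNIV" by (rule infsum_shift)
  finally show ?thesis .
qed

definition fA :: "complex \<Rightarrow> int \<Rightarrow> nat \<Rightarrow> complex" where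
  "fA q t m = infsum (\<lambda>j. chi (j + t) * q ^ tri j * qbinom q (2 * int m) (int m + j)) UNIV"

definition fO :: "complex \<Rightarrow> int \<Rightarrow> nat \<Rightarrow> complex" where
  "fO q t m = infsum (\<lambda>j. chi (j + t) * q ^ tri j * qbinom q (2 * int m + 1) (int m + j)) UNIV"

lemma tri_pred: "int (tri j) = int (tri (j - 1)) + j - 1"
  using tri_succ[of "j - 1"] by simp

lemma R1:
  assumes q: "norm q < 1"
  shows "fO q t m = fA q t m + q ^ m * fA q (t + 1) m"
  unfolding fO_def fA_def
proof (rule infsum_split[where d = "-1" and lo = "- int m - 1" and hi = "int m + 1"])
  fix j :: int
  have p: "qbinom q (2 * int m + 1) (int m + j) = q ^ nat (2 * int m + 1 - (int m + j)) * qbinom q (2 * int m) (int m + j - 1) + qbinom q (2 * int m) (int m + j)"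
    using pascal2[OF q, of "2 * int m" "int m + j"] by simp
  have e: "q ^ tri j * q ^ nat (2 * int m + 1 - (int m + j)) * qbinom q (2 * int m) (int m + j - 1)
      = q ^ m * (q ^ tri (j + - 1) * qbinom q (2 * int m) (int m + (j + - 1)))"
  proof (cases "qbinom q (2 * int m) (int m + j - 1) = 0")
    case False
    then have "int m + j - 1 \<le> 2 * int m" using qbinom_out[of "int m + j - 1" "2 * int m" q] by linarith
    then have "tri j + nat (2 * int m + 1 - (int m + j)) = m + tri (j - 1)"
      using tri_pred[of j] by linarith
    then show ?thesis by (simp add: power_add[symmetric] algebra_simps)
  next
    case True
    then have "qbinom q (2 * int m) (int m + (j + - 1)) = 0" by (simp add: algebra_simps)
    then show ?thesis using True by simp
  qed
  show "chi (j + t) * q ^ tri j * qbinom q (2 * int m + 1) (int m + j) =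
         chi (j + t) * q ^ tri j * qbinom q (2 * int m) (int m + j) +
         q ^ m * (chi (j + - 1 + (t + 1)) * q ^ tri (j + - 1) * qbinom q (2 * int m) (int m + (j + - 1)))"
    unfolding p using e by (simp add: algebra_simps)
qed (auto simp: qbinom_out)

lemma R2:
  assumes q: "norm q < 1"
  shows "fA q t (Suc m) = fO q t m + q ^ (m + 1) * fO q (t - 1) m"
  unfolding fO_def fA_def
proof (rule infsum_split[where d = "1" and lo = "- int m - 1" and hi = "int m + 1"])
  fix j :: int
  have p: "qbinom q (2 * int (Suc m)) (int (Suc m) + j) = qbinom q (2 * int m + 1) (int m + j) + q ^ nat (int m + 1 + j) * qbinom q (2 * int m + 1) (int m + 1 + j)"
    using pascal1[OF q, of "2 * int m + 1" "int m + 1 + j"] by (simp add: algebra_simps)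
  have e: "q ^ tri j * q ^ nat (int m + 1 + j) * qbinom q (2 * int m + 1) (int m + 1 + j)
      = q ^ (m + 1) * (q ^ tri (j + 1) * qbinom q (2 * int m + 1) (int m + (j + 1)))"
  proof (cases "qbinom q (2 * int m + 1) (int m + 1 + j) = 0")
    case False
    then have "0 \<le> int m + 1 + j" using qbinom_out[of "int m + 1 + j" "2 * int m + 1" q] by linarith
    then have "tri j + nat (int m + 1 + j) = m + 1 + tri (j + 1)"
      using tri_succ[of j] by linarith
    then show ?thesis by (simp add: power_add[symmetric] algebra_simps)
  next
    case True
    then have "qbinom q (2 * int m + 1) (int m + (j + 1)) = 0" by (simp add: algebra_simps)
    then show ?thesis using True by simp
  qed
  show "chi (j + t) * q ^ tri j * qbinom q (2 * int (Suc m)) (int (Suc m) + j) =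
         chi (j + t) * q ^ tri j * qbinom q (2 * int m + 1) (int m + j) +
         q ^ (m + 1) * (chi (j + 1 + (t - 1)) * q ^ tri (j + 1) * qbinom q (2 * int m + 1) (int m + (j + 1)))"
    unfolding p using e by (simp add: algebra_simps)
qed (auto simp: qbinom_out)

definition Pq :: "complex \<Rightarrow> nat \<Rightarrow> complex" where
  "Pq q m = qpoch (-1) (q ^ 3) m / qpoch (-1) q m"

definition ct :: "complex \<Rightarrow> int \<Rightarrow> nat \<Rightarrow> complex" where
  "ct q t m = (if t mod 3 = 0 then 1 - q ^ m else if t mod 3 = 1 then q ^ m else -1)"

lemma onepq_nz:
  fixes q :: complex
  assumes q: "norm q < 1" shows "1 + q ^ m \<noteq> 0"
proof (cases m)
  case 0
  have "(1::complex) + 1 = 2" by simp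
  then show ?thesis using 0 by simp
next
  case (Suc n)
  have a: "norm q ^ Suc n < 1"
    using power_less_one_iff[of "norm q" "Suc n"] q by simp
  have "norm (q ^ Suc n) < 1"
    using a by (simp only: norm_power)
  then have "q ^ Suc n \<noteq> -1" by auto
  then show ?thesis using Suc by (metis add_eq_0_iff)
qed

lemma Pq_0[simp]: "Pq q 0 = 1" by (simp add: Pq_def qpoch_def)

lemma Pq_Suc:
  assumes q: "norm q < 1"
  shows "Pq q (Suc m) = Pq q m * (1 - q ^ m + q ^ (2 * m))"
proof -
  have n: "1 + q ^ m \<noteq> 0" by (rule onepq_nz[OF q])
  have f: "1 + q ^ (3 * m) = (1 + q ^ m) * (1 - q ^ m + q ^ (2 * m))"
    by (simp add: algebra_simps power_add[symmetric] power_mult_distrib)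
       (simp add: numeral_3_eq_3 numeral_2_eq_2 power_add)
  have g: "(1 + q ^ (3 * m)) / (1 + q ^ m) = 1 - q ^ m + q ^ (2 * m)"
    unfolding f using n by simp
  have "Pq q (Suc m) = qpoch (-1) (q ^ 3) m * (1 + q ^ (3 * m)) / (qpoch (-1) q m * (1 + q ^ m))"
    by (simp add: Pq_def qpoch_def power_mult)
  also have "\<dots> = Pq q m * ((1 + q ^ (3 * m)) / (1 + q ^ m))"
    unfolding Pq_def by simp
  finally show ?thesis unfolding g .
qed

lemma fA_0:
  assumes q: "norm q < 1" shows "fA q t 0 = chi t"
proof -
  have "fA q t 0 = chi (0 + t) * q ^ tri 0 * qbinom q (2 * int 0) (int 0 + 0)"
    unfolding fA_def
  proof (rule infsum_single)
    fix j :: int assume "j \<noteq> 0"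
    then have "qbinom q (2 * int 0) (int 0 + j) = 0" by (intro qbinom_out) auto
    then show "chi (j + t) * q ^ tri j * qbinom q (2 * int 0) (int 0 + j) = 0" by simp
  qed
  then show ?thesis using qbinom_0[OF q, of 0] by simp
qed

lemma fA_closed:
  assumes q: "norm q < 1" shows "fA q t m = ct q t m * Pq q m"
proof (induction m arbitrary: t)
  case 0
  have "t mod 3 \<in> {0,1,2}" by auto
  then show ?case by (auto simp: fA_0[OF q] chi_eq ct_def)
next
  case (Suc m)
  have e: "fA q t (Suc m) = Pq q m * (ct q t m + q ^ m * ct q (t + 1) m
      + q ^ (m + 1) * (ct q (t - 1) m + q ^ m * ct q t m))"
    unfolding R2[OF q] R1[OF q] Suc by (simp add: algebra_simps)
  have p2: "q ^ (2 * m) = q ^ m * q ^ m" by (simp add: mult_2 power_add)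
  have "t mod 3 = 0 \<or> t mod 3 = 1 \<or> t mod 3 = 2" by auto
  then have "ct q t m + q ^ m * ct q (t + 1) m
      + q ^ (m + 1) * (ct q (t - 1) m + q ^ m * ct q t m) = ct q t (Suc m) * (1 - q ^ m + q ^ (2 * m))"
  proof (elim disjE)
    assume h: "t mod 3 = 0"
    have "(t + 1) mod 3 = 1" "(t - 1) mod 3 = 2" using h by presburger+
    then show ?thesis using h unfolding ct_def p2
      by (simp add: power_add algebra_simps)
  next
    assume h: "t mod 3 = 1"
    have "(t + 1) mod 3 = 2" "(t - 1) mod 3 = 0" using h by presburger+
    then show ?thesis using h unfolding ct_def p2
      by (simp add: power_add algebra_simps)
  next
    assume h: "t mod 3 = 2"
    have "(t + 1) mod 3 = 0" "(t - 1) mod 3 = 1" using h by presburger+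
    then show ?thesis using h unfolding ct_def p2
      by (simp add: power_add algebra_simps)
  qed
  then have "fA q t (Suc m) = Pq q m * (ct q t (Suc m) * (1 - q ^ m + q ^ (2 * m)))"
    by (subst e) simp
  then show ?case by (simp add: Pq_Suc[OF q])
qed

lemma infsum_split':
  fixes f g h :: "int \<Rightarrow> complex"
  assumes "\<And>j. f j = a * g j + c * h (j + d)"
    and "\<And>j. j < lo \<or> j > hi \<Longrightarrow> g j = 0"
    and "\<And>j. j < lo \<or> j > hi \<Longrightarrow> h j = 0"
  shows "infsum f UNIV = a * infsum g UNIV + c * infsum h UNIV"
proof -
  have "infsum f UNIV = infsum (\<lambda>j. a * g j) UNIV + c * infsum h UNIV"
    by (rule infsum_split[of f "\<lambda>j. a * g j" c h d lo hi]) (use assms in auto)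
  also have "infsum (\<lambda>j. a * g j) UNIV = a * infsum g UNIV"
    by (rule infsum_cmult_right) (rule summ[of lo hi], use assms(2) in auto)
  finally show ?thesis .
qed

lemma seedR:
  assumes q: "norm q < 1"
  shows "infsum (\<lambda>j. chi j * q ^ tri (j - 1) * qbinom q (2 * int m + 1) (int m + j)) UNIV
         = q ^ m * (1 + q - q ^ (m + 1)) * Pq q m"
proof -
  have "infsum (\<lambda>j. chi j * q ^ tri (j - 1) * qbinom q (2 * int m + 1) (int m + j)) UNIV
        = q ^ (m + 1) * fA q 0 m + 1 * fA q 1 m"
    unfolding fA_def
  proof (rule infsum_split'[where d = "-1" and lo = "- int m - 1" and hi = "int m + 1"])
    fix j :: int
    have p: "qbinom q (2 * int m + 1) (int m + j) = qbinom q (2 * int m) (int m + j - 1) + q ^ nat (int m + j) * qbinom q (2 * int m) (int m + j)"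
      using pascal1[OF q, of "2 * int m" "int m + j"] by simp
    have e: "q ^ tri (j - 1) * q ^ nat (int m + j) * qbinom q (2 * int m) (int m + j)
        = q ^ (m + 1) * (q ^ tri j * qbinom q (2 * int m) (int m + j))"
    proof (cases "qbinom q (2 * int m) (int m + j) = 0")
      case False
      then have "0 \<le> int m + j" using qbinom_out[of "int m + j" "2 * int m" q] by linarith
      then have "tri (j - 1) + nat (int m + j) = m + 1 + tri j"
        using tri_pred[of j] by linarith
      then show ?thesis by (simp add: power_add[symmetric] algebra_simps)
    qed simp
    have e2: "qbinom q (2 * int m) (int m + (j + - 1)) = qbinom q (2 * int m) (int m + j - 1)"
      by (simp add: algebra_simps)
    show "chi j * q ^ tri (j - 1) * qbinom q (2 * int m + 1) (int m + j) =
         q ^ (m + 1) * (chi (j + 0) * q ^ tri j * qbinom q (2 * int m) (int m + j)) +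
         1 * (chi (j + - 1 + 1) * q ^ tri (j + - 1) * qbinom q (2 * int m) (int m + (j + - 1)))"
      unfolding p e2 using e by (simp add: algebra_simps)
  qed (auto simp: qbinom_out)
  also have "\<dots> = q ^ m * (1 + q - q ^ (m + 1)) * Pq q m"
    unfolding fA_closed[OF q] ct_def by (simp add: algebra_simps power_add)
  finally show ?thesis .
qed

lemma zsum_fold:
  fixes F :: "int \<Rightarrow> complex"
  assumes "\<And>j. j < - int M \<or> j > int M + 1 \<Longrightarrow> F j = 0"
  shows "infsum F UNIV = (\<Sum>r\<le>M. F (int r + 1) + F (- int r))"
proof -
  have "infsum F UNIV = infsum F {- int M..int M + 1}"
    by (rule infsum_cong_neutral) (use assms in auto)
  also have "\<dots> = sum F {- int M..int M + 1}" by simp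
  also have "{- int M..int M + 1} = {- int M..0} \<union> {1..int M + 1}" by auto
  also have "sum F \<dots> = sum F {- int M..0} + sum F {1..int M + 1}"
    by (rule sum.union_disjoint) auto
  also have "sum F {1..int M + 1} = (\<Sum>r\<le>M. F (int r + 1))"
    by (rule sum.reindex_bij_witness[of _ "\<lambda>r. int r + 1" "\<lambda>j. nat (j - 1)"]) auto
  also have "sum F {- int M..0} = (\<Sum>r\<le>M. F (- int r))"
    by (rule sum.reindex_bij_witness[of _ "\<lambda>r. - int r" "\<lambda>j. nat (- j)"]) auto
  finally show ?thesis by (simp add: sum.distrib)
qed

definition tt :: "complex \<Rightarrow> nat \<Rightarrow> nat \<Rightarrow> nat \<Rightarrow> complex" where
  "tt q n c k = (if k \<le> n then q ^ (k * k + c * k) * (qfact q n * qfact q (n + c))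
       / (qfact q k * qfact q (c + k) * qfact q (n - k)) else 0)"

lemma tt_alg:
  fixes A Ak D B Bb N Nn Cq w y z :: complex
  assumes "A \<noteq> 0" "Ak \<noteq> 0" "D \<noteq> 0" "B \<noteq> 0" "Bb \<noteq> 0"
    and h: "y * Nn = y * Bb + z * Ak"
  shows "y * (N * Nn * (Cq * w)) / (A * Ak * D * (B * Bb))
       = w * (y * (N * Cq) / (A * Ak * D * B)) + z * (N * (Cq * w)) / (A * D * (B * Bb))"
proof -
  have "w * (y * (N * Cq) / (A * Ak * D * B)) + z * (N * (Cq * w)) / (A * D * (B * Bb))
      = N * Cq * w * (y * Bb + z * Ak) / (A * Ak * D * (B * Bb))"
    using assms(1-5) by (simp add: field_simps)
  also have "\<dots> = y * (N * Nn * (Cq * w)) / (A * Ak * D * (B * Bb))"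
    unfolding h[symmetric] by (simp add: algebra_simps)
  finally show ?thesis by simp
qed

lemma tt_0:
  assumes q: "norm q < 1"
  shows "tt q (Suc n) c 0 = (1 - q ^ (c + n + 1)) * tt q n c 0"
proof -
  have nz: "\<And>n. qfact q n \<noteq> 0" using qfact_nz[OF q] .
  have nq: "\<And>m. q * q ^ m \<noteq> 1"
    using nz by (metis qfact_Suc power_Suc mult_zero_right right_minus_eq)
  show ?thesis unfolding tt_def using nz nq by (simp add: qfact_Suc add.commute)
qed

lemma tt_S:
  assumes q: "norm q < 1"
  shows "tt q (Suc n) c (Suc k) = (1 - q ^ (c + n + 1)) * tt q n c (Suc k) + q ^ (c + n + 1) * tt q n (Suc c) k"
proof -
  have nz: "\<And>n. qfact q n \<noteq> 0" using qfact_nz[OF q] .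
  have qS: "\<And>n. qfact q (n + 1) = qfact q n * (1 - q ^ (n + 1))" using qfact_Suc by simp
  have nz1: "\<And>n. 1 - q ^ (n + 1) \<noteq> 0" using nz qS by (metis mult_zero_right)
  consider "k > n" | "k = n" | "k < n" by linarith
  then show ?thesis
  proof cases
    case 1 then show ?thesis by (simp add: tt_def)
  next
    case 2
    have e1: "qfact q (Suc n + c) = qfact q (n + c) * (1 - q ^ (c + n + 1))"
      using qS[of "n + c"] by (simp add: algebra_simps)
    have e2: "qfact q (c + Suc n) = qfact q (n + c) * (1 - q ^ (c + n + 1))"
      using qS[of "n + c"] by (simp add: algebra_simps)
    have e3: "qfact q (n + Suc c) = qfact q (n + c) * (1 - q ^ (c + n + 1))"
      using qS[of "n + c"] by (simp add: algebra_simps)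
    have e4: "qfact q (Suc c + n) = qfact q (n + c) * (1 - q ^ (c + n + 1))"
      using qS[of "n + c"] by (simp add: algebra_simps)
    have ex: "q ^ (Suc n * Suc n + c * Suc n) = q ^ (c + n + 1) * q ^ (n * n + Suc c * n)"
      by (simp add: power_add[symmetric] algebra_simps)
    have "tt q (Suc n) c (Suc n) = q ^ (Suc n * Suc n + c * Suc n)"
      unfolding tt_def using nz by (simp add: add.commute)
    moreover have "tt q n (Suc c) n = q ^ (n * n + Suc c * n)"
      unfolding tt_def using nz by (simp add: add.commute)
    moreover have "tt q n c (Suc n) = 0" by (simp add: tt_def)
    ultimately show ?thesis using 2 ex by simp
  next
    case 3
    then obtain b where b: "n = k + b + 1" by (metis add.commute add_Suc_right less_iff_Suc_add plus_1_eq_Suc)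
    define A where "A = qfact q k"
    define Ak where "Ak = 1 - q ^ (k + 1)"
    define D where "D = qfact q (c + k + 1)"
    define B where "B = qfact q b"
    define Bb where "Bb = 1 - q ^ (b + 1)"
    define N where "N = qfact q n"
    define Nn where "Nn = 1 - q ^ (n + 1)"
    define Cq where "Cq = qfact q (n + c)"
    define w where "w = 1 - q ^ (c + n + 1)"
    define y where "y = q ^ (Suc k * Suc k + c * Suc k)"
    define z where "z = q ^ (c + n + 1) * q ^ (k * k + Suc c * k)"
    have l: "tt q (Suc n) c (Suc k) = y * (N * Nn * (Cq * w)) / (A * Ak * D * (B * Bb))"
    proof -
      have "qfact q (Suc n) = N * Nn" unfolding N_def Nn_def using qS[of n] by simp
      moreover have "qfact q (Suc n + c) = Cq * w" unfolding Cq_def w_def using qS[of "n + c"] by (simp add: algebra_simps)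
      moreover have "qfact q (Suc k) = A * Ak" unfolding A_def Ak_def using qS[of k] by simp
      moreover have "qfact q (c + Suc k) = D" unfolding D_def by simp
      moreover have "qfact q (Suc n - Suc k) = B * Bb" unfolding B_def Bb_def using qS[of b] b by simp
      ultimately show ?thesis unfolding tt_def y_def using b by (simp add: mult.assoc)
    qed
    have r1: "tt q n c (Suc k) = y * (N * Cq) / (A * Ak * D * B)"
    proof -
      have "qfact q (Suc k) = A * Ak" unfolding A_def Ak_def using qS[of k] by simp
      moreover have "qfact q (c + Suc k) = D" unfolding D_def by simp
      moreover have "qfact q (n - Suc k) = B" unfolding B_def using b by simp
      ultimately show ?thesis unfolding tt_def y_def N_def Cq_def using b by (simp add: mult.assoc)
    qed
    have r2: "q ^ (c + n + 1) * tt q n (Suc c) k = z * (N * (Cq * w)) / (A * D * (B * Bb))"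
    proof -
      have "qfact q (n + Suc c) = Cq * w" unfolding Cq_def w_def using qS[of "n + c"] by (simp add: algebra_simps)
      moreover have "qfact q (Suc c + k) = D" unfolding D_def by (simp add: algebra_simps)
      moreover have "qfact q (n - k) = B * Bb" unfolding B_def Bb_def using qS[of b] b by simp
      ultimately show ?thesis unfolding tt_def z_def N_def A_def using b by (simp add: mult.assoc)
    qed
    have h: "y * Nn = y * Bb + z * Ak"
    proof -
      have zq: "z = y * q ^ (b + 1)" unfolding z_def y_def using b by (simp add: power_add[symmetric] algebra_simps)
      have nq: "q ^ (n + 1) = q ^ (b + 1) * q ^ (k + 1)" using b by (simp add: power_add[symmetric] algebra_simps)
      show ?thesis unfolding Nn_def Bb_def Ak_def zq nq by (simp add: algebra_simps)
    qed
    have nzs: "A \<noteq> 0" "Ak \<noteq> 0" "D \<noteq> 0" "B \<noteq> 0" "Bb \<noteq> 0"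
      unfolding A_def Ak_def D_def B_def Bb_def using nz nz1 by auto
    show ?thesis unfolding l r1 r2 w_def[symmetric] using tt_alg[OF nzs h] by simp
  qed
qed

lemma tt_sum:
  assumes q: "norm q < 1"
  shows "(\<Sum>k\<le>n. tt q n c k) = 1"
proof (induction n arbitrary: c)
  case 0
  then show ?case using qfact_nz[OF q] by (simp add: tt_def)
next
  case (Suc n)
  have "(\<Sum>k\<le>Suc n. tt q (Suc n) c k) = tt q (Suc n) c 0 + (\<Sum>k\<le>n. tt q (Suc n) c (Suc k))"
    by (rule sum.atMost_Suc_shift)
  also have "\<dots> = (1 - q ^ (c + n + 1)) * (tt q n c 0 + (\<Sum>k\<le>n. tt q n c (Suc k)))
       + q ^ (c + n + 1) * (\<Sum>k\<le>n. tt q n (Suc c) k)"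
  proof -
    define x where "x = q ^ (c + n + 1)"
    have "(\<Sum>k\<le>n. tt q (Suc n) c (Suc k)) = (\<Sum>k\<le>n. (1 - x) * tt q n c (Suc k) + x * tt q n (Suc c) k)"
      unfolding x_def tt_S[OF q] by simp
    also have "\<dots> = (1 - x) * (\<Sum>k\<le>n. tt q n c (Suc k)) + x * (\<Sum>k\<le>n. tt q n (Suc c) k)"
      by (simp add: sum.distrib sum_distrib_left)
    finally have "(\<Sum>k\<le>n. tt q (Suc n) c (Suc k)) = (1 - x) * (\<Sum>k\<le>n. tt q n c (Suc k)) + x * (\<Sum>k\<le>n. tt q n (Suc c) k)" .
    moreover have "tt q (Suc n) c 0 = (1 - x) * tt q n c 0" unfolding x_def by (rule tt_0[OF q])
    ultimately show ?thesis unfolding x_def[symmetric] by (simp add: algebra_simps)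
  qed
  also have "tt q n c 0 + (\<Sum>k\<le>n. tt q n c (Suc k)) = (\<Sum>k\<le>Suc n. tt q n c k)"
    by (rule sum.atMost_Suc_shift[symmetric])
  also have "\<dots> = (\<Sum>k\<le>n. tt q n c k)" by (simp add: tt_def)
  finally show ?case using Suc by simp
qed

lemma key2:
  assumes q: "norm q < 1"
  shows "(\<Sum>k\<le>n. q ^ (k * k + c * k) / (qfact q k * qfact q (c + k) * qfact q (n - k)))
       = 1 / (qfact q n * qfact q (n + c))"
proof -
  have nz: "\<And>n. qfact q n \<noteq> 0" using qfact_nz[OF q] .
  have "1 = (\<Sum>k\<le>n. tt q n c k)" using tt_sum[OF q] by simp
  also have "\<dots> = (\<Sum>k\<le>n. (qfact q n * qfact q (n + c)) * (q ^ (k * k + c * k) / (qfact q k * qfact q (c + k) * qfact q (n - k))))"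
    by (rule sum.cong) (auto simp: tt_def)
  also have "\<dots> = (qfact q n * qfact q (n + c)) * (\<Sum>k\<le>n. q ^ (k * k + c * k) / (qfact q k * qfact q (c + k) * qfact q (n - k)))"
    by (simp add: sum_distrib_left)
  finally show ?thesis using nz by (simp add: field_simps)
qed

lemma bailey:
  assumes q: "norm q < 1"
    and beta: "\<And>K. \<beta> K = (\<Sum>r\<le>K. \<alpha> r / (qfact q (K - r) * qfact q (K + r + 1)))"
  shows "(\<Sum>K\<le>M. q ^ (K * (K + 1)) * \<beta> K / qfact q (M - K))
       = (\<Sum>r\<le>M. q ^ (r * (r + 1)) * \<alpha> r / (qfact q (M - r) * qfact q (M + r + 1)))"
proof -
  define g where "g i j = q ^ ((i + j) * (i + j + 1)) * \<alpha> i / (qfact q j * qfact q (2 * i + j + 1) * qfact q (M - (i + j)))" for i j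
  have "(\<Sum>K\<le>M. q ^ (K * (K + 1)) * \<beta> K / qfact q (M - K)) = (\<Sum>K\<le>M. \<Sum>i\<le>K. g i (K - i))"
  proof (rule sum.cong[OF refl])
    fix K assume "K \<in> {..M}"
    have "q ^ (K * (K + 1)) * \<beta> K / qfact q (M - K)
        = (\<Sum>r\<le>K. q ^ (K * (K + 1)) * (\<alpha> r / (qfact q (K - r) * qfact q (K + r + 1))) / qfact q (M - K))"
      unfolding beta by (simp add: sum_distrib_left sum_divide_distrib)
    also have "\<dots> = (\<Sum>i\<le>K. g i (K - i))"
    proof (rule sum.cong[OF refl])
      fix r assume "r \<in> {..K}"
      then have "r \<le> K" by simp
      then have "r + (K - r) = K" "2 * r + (K - r) + 1 = K + r + 1" by auto
      then show "q ^ (K * (K + 1)) * (\<alpha> r / (qfact q (K - r) * qfact q (K + r + 1))) / qfact q (M - K) = g r (K - r)"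
        unfolding g_def by (simp add: field_simps)
    qed
    finally show "q ^ (K * (K + 1)) * \<beta> K / qfact q (M - K) = (\<Sum>i\<le>K. g i (K - i))" .
  qed
  also have "\<dots> = sum (\<lambda>(i, j). g i j) {(i, j). i + j \<le> M}"
    by (rule sum.triangle_reindex_eq[symmetric])
  also have "{(i, j). i + j \<le> M} = Sigma {..M} (\<lambda>i. {..M - i})" by auto
  also have "sum (\<lambda>(i, j). g i j) (Sigma {..M} (\<lambda>i. {..M - i})) = (\<Sum>i\<le>M. \<Sum>j\<le>M - i. g i j)"
    by (rule sum.Sigma[symmetric]) auto
  also have "\<dots> = (\<Sum>r\<le>M. q ^ (r * (r + 1)) * \<alpha> r / (qfact q (M - r) * qfact q (M + r + 1)))"
  proof (rule sum.cong[OF refl])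
    fix r assume "r \<in> {..M}"
    then have rM: "r \<le> M" by simp
    have "(\<Sum>j\<le>M - r. g r j) = (\<Sum>k\<le>M - r. (q ^ (r * (r + 1)) * \<alpha> r) *
        (q ^ (k * k + (2 * r + 1) * k) / (qfact q k * qfact q ((2 * r + 1) + k) * qfact q ((M - r) - k))))"
    proof (rule sum.cong[OF refl])
      fix k assume "k \<in> {..M - r}"
      have e1: "(r + k) * (r + k + 1) = r * (r + 1) + (k * k + (2 * r + 1) * k)" by (simp add: algebra_simps)
      have e2: "M - (r + k) = (M - r) - k" by simp
      show "g r k = (q ^ (r * (r + 1)) * \<alpha> r) *
        (q ^ (k * k + (2 * r + 1) * k) / (qfact q k * qfact q ((2 * r + 1) + k) * qfact q ((M - r) - k)))"
        unfolding g_def e1 e2 power_add by (simp add: algebra_simps)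
    qed
    also have "\<dots> = (q ^ (r * (r + 1)) * \<alpha> r) * (1 / (qfact q (M - r) * qfact q (M - r + (2 * r + 1))))"
      by (subst sum_distrib_left[symmetric], subst key2[OF q], rule refl)
    also have "M - r + (2 * r + 1) = M + r + 1" using rM by simp
    finally show "(\<Sum>j\<le>M - r. g r j) = q ^ (r * (r + 1)) * \<alpha> r / (qfact q (M - r) * qfact q (M + r + 1))"
      by simp
  qed
  finally show ?thesis .
qed

definition alpha :: "complex \<Rightarrow> nat \<Rightarrow> complex" where
  "alpha q r = chi (int r + 1) * q ^ tri (int r) + chi (- int r) * q ^ tri (- int r - 1)"

lemma Wq1:
  assumes "r \<le> K"
  shows "qbinom q (2 * int K + 1) (int K + int r + 1) = qfact q (2 * K + 1) / (qfact q (K - r) * qfact q (K + r + 1))"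
proof -
  have "qbinom q (int (2 * K + 1)) (int (K + r + 1)) = qfact q (2 * K + 1) / (qfact q (K + r + 1) * qfact q (2 * K + 1 - (K + r + 1)))"
    by (rule qbinom_nat) (use assms in auto)
  moreover have "2 * K + 1 - (K + r + 1) = K - r" using assms by simp
  moreover have "int (2 * K + 1) = 2 * int K + 1" "int (K + r + 1) = int K + int r + 1" by simp_all
  ultimately show ?thesis by (simp only: mult.commute)
qed

lemma Wq2:
  assumes "r \<le> K"
  shows "qbinom q (2 * int K + 1) (int K - int r) = qfact q (2 * K + 1) / (qfact q (K - r) * qfact q (K + r + 1))"
proof -
  have "qbinom q (int (2 * K + 1)) (int (K - r)) = qfact q (2 * K + 1) / (qfact q (K - r) * qfact q (2 * K + 1 - (K - r)))"
    by (rule qbinom_nat) (use assms in auto)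
  moreover have "2 * K + 1 - (K - r) = K + r + 1" using assms by simp
  moreover have "int (2 * K + 1) = 2 * int K + 1" "int (K - r) = int K - int r" using assms by simp_all
  ultimately show ?thesis by (simp only: mult.commute)
qed

definition beta0 :: "complex \<Rightarrow> nat \<Rightarrow> complex" where
  "beta0 q K = q ^ K * (1 + q - q ^ (K + 1)) * Pq q K / qfact q (2 * K + 1)"

lemma beta0_pair:
  assumes q: "norm q < 1"
  shows "beta0 q K = (\<Sum>r\<le>K. alpha q r / (qfact q (K - r) * qfact q (K + r + 1)))"
proof -
  have "q ^ K * (1 + q - q ^ (K + 1)) * Pq q K
      = infsum (\<lambda>j. chi j * q ^ tri (j - 1) * qbinom q (2 * int K + 1) (int K + j)) UNIV"
    using seedR[OF q] by simp
  also have "\<dots> = (\<Sum>r\<le>K. chi (int r + 1) * q ^ tri (int r + 1 - 1) * qbinom q (2 * int K + 1) (int K + (int r + 1))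
       + chi (- int r) * q ^ tri (- int r - 1) * qbinom q (2 * int K + 1) (int K + - int r))"
    by (rule zsum_fold) (auto simp: qbinom_out)
  also have "\<dots> = (\<Sum>r\<le>K. alpha q r * (qfact q (2 * K + 1) / (qfact q (K - r) * qfact q (K + r + 1))))"
  proof (rule sum.cong[OF refl])
    fix r assume "r \<in> {..K}"
    then have rK: "r \<le> K" by simp
    have a: "qbinom q (2 * int K + 1) (int K + (int r + 1)) = qfact q (2 * K + 1) / (qfact q (K - r) * qfact q (K + r + 1))"
      using Wq1[OF rK] by (simp add: add.assoc)
    have b: "qbinom q (2 * int K + 1) (int K + - int r) = qfact q (2 * K + 1) / (qfact q (K - r) * qfact q (K + r + 1))"
      using Wq2[OF rK] by simp
    show "chi (int r + 1) * q ^ tri (int r + 1 - 1) * qbinom q (2 * int K + 1) (int K + (int r + 1))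
       + chi (- int r) * q ^ tri (- int r - 1) * qbinom q (2 * int K + 1) (int K + - int r)
       = alpha q r * (qfact q (2 * K + 1) / (qfact q (K - r) * qfact q (K + r + 1)))"
      unfolding a b alpha_def by (simp add: algebra_simps)
  qed
  also have "\<dots> = qfact q (2 * K + 1) * (\<Sum>r\<le>K. alpha q r / (qfact q (K - r) * qfact q (K + r + 1)))"
    by (simp add: sum_distrib_left ac_simps)
  finally show ?thesis unfolding beta0_def using qfact_nz[OF q, of "2 * K + 1"]
    by (simp add: field_simps)
qed

fun betav :: "complex \<Rightarrow> nat \<Rightarrow> nat \<Rightarrow> complex" where
  "betav q 0 M = beta0 q M"
| "betav q (Suc v) M = (\<Sum>K\<le>M. q ^ (K * (K + 1)) * betav q v K / qfact q (M - K))"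

lemma betav_closed:
  assumes q: "norm q < 1"
  shows "betav q v M = (\<Sum>r\<le>M. q ^ (v * (r * (r + 1))) * alpha q r / (qfact q (M - r) * qfact q (M + r + 1)))"
proof (induction v arbitrary: M)
  case 0
  then show ?case using beta0_pair[OF q] by simp
next
  case (Suc v)
  have "betav q (Suc v) M = (\<Sum>r\<le>M. q ^ (r * (r + 1)) * (q ^ (v * (r * (r + 1))) * alpha q r) / (qfact q (M - r) * qfact q (M + r + 1)))"
    unfolding betav.simps by (rule bailey[OF q]) (use Suc in simp)
  also have "\<dots> = (\<Sum>r\<le>M. q ^ (Suc v * (r * (r + 1))) * alpha q r / (qfact q (M - r) * qfact q (M + r + 1)))"
    by (simp add: power_add mult.assoc)
  finally show ?case .
qed

lemma rhs_conv:
  assumes q: "norm q < 1"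
  shows "(\<Sum>\<^sub>\<infinity> j :: int. of_int (Legendre j 3)
            * q powi (((2 * int v + 1) * j^2 - (2 * int v + 3) * j) div 2 + 1)
            * qbinom q (2 * int L + 1) (int L + j))
       = qfact q (2 * L + 1) * betav q v L"
proof -
  have "(\<Sum>\<^sub>\<infinity> j :: int. of_int (Legendre j 3)
            * q powi (((2 * int v + 1) * j^2 - (2 * int v + 3) * j) div 2 + 1)
            * qbinom q (2 * int L + 1) (int L + j))
      = (\<Sum>r\<le>L. chi (int r + 1) * q powi (((2 * int v + 1) * (int r + 1)^2 - (2 * int v + 3) * (int r + 1)) div 2 + 1)
            * qbinom q (2 * int L + 1) (int L + (int r + 1))
          + chi (- int r) * q powi (((2 * int v + 1) * (- int r)^2 - (2 * int v + 3) * (- int r)) div 2 + 1)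
            * qbinom q (2 * int L + 1) (int L + - int r))"
    unfolding chi_def[symmetric] by (rule zsum_fold) (auto simp: qbinom_out)
  also have "\<dots> = (\<Sum>r\<le>L. q ^ (v * (r * (r + 1))) * alpha q r * (qfact q (2 * L + 1) / (qfact q (L - r) * qfact q (L + r + 1))))"
  proof (rule sum.cong[OF refl])
    fix r assume "r \<in> {..L}"
    then have rK: "r \<le> L" by simp
    have a: "qbinom q (2 * int L + 1) (int L + (int r + 1)) = qfact q (2 * L + 1) / (qfact q (L - r) * qfact q (L + r + 1))"
      using Wq1[OF rK] by (simp add: add.assoc)
    have b: "qbinom q (2 * int L + 1) (int L + - int r) = qfact q (2 * L + 1) / (qfact q (L - r) * qfact q (L + r + 1))"
      using Wq2[OF rK] by simp
    define R where "R = int r"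
    define V where "V = int v"
    have e1: "((2 * V + 1) * (R + 1)^2 - (2 * V + 3) * (R + 1)) div 2 + 1 = int (v * (r * (r + 1)) + tri R)"
    proof -
      have "(2 * V + 1) * (R + 1)^2 - (2 * V + 3) * (R + 1) = 2 * (V * R * (R + 1) - 1) + R * (R - 1)"
        by (simp add: algebra_simps power2_eq_square)
      then have "((2 * V + 1) * (R + 1)^2 - (2 * V + 3) * (R + 1)) div 2 = V * R * (R + 1) - 1 + R * (R - 1) div 2"
        by simp
      then show ?thesis unfolding tri_int[symmetric] V_def R_def by (simp add: algebra_simps)
    qed
    have e2: "((2 * V + 1) * (- R)^2 - (2 * V + 3) * (- R)) div 2 + 1 = int (v * (r * (r + 1)) + tri (- R - 1))"
    proof -
      have "(2 * V + 1) * (- R)^2 - (2 * V + 3) * (- R) = 2 * (V * R * (R + 1)) + (- R - 1) * (- R - 1 - 1) - 2"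
        by (simp add: algebra_simps power2_eq_square)
      then have "((2 * V + 1) * (- R)^2 - (2 * V + 3) * (- R)) div 2 = V * R * (R + 1) + (- R - 1) * (- R - 1 - 1) div 2 - 1"
        by simp
      then show ?thesis unfolding tri_int[symmetric] V_def R_def by (simp add: algebra_simps)
    qed
    show "chi (int r + 1) * q powi (((2 * int v + 1) * (int r + 1)^2 - (2 * int v + 3) * (int r + 1)) div 2 + 1)
            * qbinom q (2 * int L + 1) (int L + (int r + 1))
          + chi (- int r) * q powi (((2 * int v + 1) * (- int r)^2 - (2 * int v + 3) * (- int r)) div 2 + 1)
            * qbinom q (2 * int L + 1) (int L + - int r)
        = q ^ (v * (r * (r + 1))) * alpha q r * (qfact q (2 * L + 1) / (qfact q (L - r) * qfact q (L + r + 1)))"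
    proof -
      have p1: "q powi (((2 * int v + 1) * (int r + 1)^2 - (2 * int v + 3) * (int r + 1)) div 2 + 1) = q ^ (v * (r * (r + 1)) + tri (int r))"
        using e1 unfolding R_def V_def by (metis power_int_of_nat)
      have p2: "q powi (((2 * int v + 1) * (- int r)^2 - (2 * int v + 3) * (- int r)) div 2 + 1) = q ^ (v * (r * (r + 1)) + tri (- int r - 1))"
        using e2 unfolding R_def V_def by (metis power_int_of_nat)
      show ?thesis unfolding p1 p2 a b alpha_def by (simp add: power_add algebra_simps)
    qed
  qed
  also have "\<dots> = qfact q (2 * L + 1) * betav q v L"
    unfolding betav_closed[OF q] by (simp add: sum_distrib_left algebra_simps)
  finally show ?thesis .
qed

definition Sset :: "nat \<Rightarrow> nat \<Rightarrow> (nat \<Rightarrow> nat) set" where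
  "Sset v L = {n. (\<forall>i. i \<notin> {1..v} \<longrightarrow> n i = 0) \<and> (\<Sum>k=1..v. n k) \<le> L}"

definition ncons :: "nat \<Rightarrow> (nat \<Rightarrow> nat) \<Rightarrow> nat \<Rightarrow> nat" where
  "ncons a m = (\<lambda>i. if i = 0 then 0 else if i = 1 then a else m (i - 1))"

lemma ncons_Suc: "i \<ge> 1 \<Longrightarrow> ncons a m (Suc i) = m i"
  by (simp add: ncons_def)

lemma ncons_1[simp]: "ncons a m 1 = a"
  by (simp add: ncons_def)

lemma sum_ncons_shift:
  assumes "i \<ge> 1"
  shows "(\<Sum>k=Suc i..Suc v. ncons a m k) = (\<Sum>k=i..v. m k)"
proof -
  have "(\<Sum>k=Suc i..Suc v. ncons a m k) = (\<Sum>k=i..v. ncons a m (Suc k))"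
    by (rule sum.shift_bounds_cl_Suc_ivl)
  also have "\<dots> = (\<Sum>k=i..v. m k)"
    by (rule sum.cong) (use assms in \<open>auto simp: ncons_Suc\<close>)
  finally show ?thesis .
qed

lemma sum_ncons:
  "(\<Sum>k=1..Suc v. ncons a m k) = a + (\<Sum>k=1..v. m k)"
proof -
  have h1: "(\<Sum>k=1..Suc v. ncons a m k) = ncons a m 1 + (\<Sum>k=Suc 1..Suc v. ncons a m k)"
    by (rule sum.atLeast_Suc_atMost) simp
  have h2: "(\<Sum>k=Suc 1..Suc v. ncons a m k) = (\<Sum>k=1..v. m k)"
    by (rule sum_ncons_shift) simp
  show ?thesis unfolding h1 h2 ncons_1 ..
qed

lemma Sset_Suc:
  assumes v: "v \<ge> 1"
  shows "Sset (Suc v) L = (\<lambda>(a, m). ncons a m) ` Sigma {..L} (\<lambda>a. Sset v (L - a))"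
proof
  show "(\<lambda>(a, m). ncons a m) ` Sigma {..L} (\<lambda>a. Sset v (L - a)) \<subseteq> Sset (Suc v) L"
  proof
    fix x assume "x \<in> (\<lambda>(a, m). ncons a m) ` Sigma {..L} (\<lambda>a. Sset v (L - a))"
    then obtain a m where x: "x = ncons a m" and a: "a \<in> {..L}" and m: "m \<in> Sset v (L - a)" by auto
    have s: "(\<Sum>k=1..Suc v. ncons a m k) \<le> L" using a m unfolding sum_ncons Sset_def by auto
    have z: "ncons a m i = 0" if "i \<notin> {1..Suc v}" for i
    proof (cases "i = 0")
      case False
      then have "i - 1 \<notin> {1..v}" "i \<noteq> 1" using that by auto
      then show ?thesis using m False unfolding Sset_def ncons_def by auto
    qed (simp add: ncons_def)
    show "x \<in> Sset (Suc v) L" using s z unfolding Sset_def x by blast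
  qed
next
  show "Sset (Suc v) L \<subseteq> (\<lambda>(a, m). ncons a m) ` Sigma {..L} (\<lambda>a. Sset v (L - a))"
  proof
    fix n assume n: "n \<in> Sset (Suc v) L"
    define m where "m = (\<lambda>i. if i = 0 then 0 else n (i + 1))"
    have n0: "n 0 = 0" using n unfolding Sset_def by auto
    have e: "n = ncons (n 1) m"
    proof
      fix i show "n i = ncons (n 1) m i"
        using n0 by (cases i) (auto simp: ncons_def m_def)
    qed
    have sm: "(\<Sum>k=1..Suc v. n k) = n 1 + (\<Sum>k=1..v. m k)"
      using sum_ncons[where v=v and a="n 1" and m=m] e by simp
    have "m \<in> Sset v (L - n 1)"
    proof -
      have "m i = 0" if "i \<notin> {1..v}" for i
        using that n unfolding m_def Sset_def by auto
      moreover have "(\<Sum>k=1..v. m k) \<le> L - n 1" using n sm unfolding Sset_def by auto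
      ultimately show ?thesis unfolding Sset_def by blast
    qed
    moreover have "n 1 \<le> L" using n sm unfolding Sset_def by auto
    ultimately show "n \<in> (\<lambda>(a, m). ncons a m) ` Sigma {..L} (\<lambda>a. Sset v (L - a))"
      using e by force
  qed
qed

lemma Sset_1: "Sset 1 L = (\<lambda>a i. if i = 1 then a else 0) ` {..L}"
proof
  show "Sset 1 L \<subseteq> (\<lambda>a i. if i = 1 then a else 0) ` {..L}"
  proof
    fix n assume n: "n \<in> Sset 1 L"
    have "n = (\<lambda>i. if i = 1 then n 1 else 0)" using n unfolding Sset_def by auto
    moreover have "n 1 \<le> L" using n unfolding Sset_def by auto
    ultimately show "n \<in> (\<lambda>a i. if i = 1 then a else 0) ` {..L}" by blast
  qed
qed (auto simp: Sset_def)

lemma Sset_finite: "v \<ge> 1 \<Longrightarrow> finite (Sset v L)"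
proof (induction v arbitrary: L rule: nat_induct_at_least)
  case base then show ?case unfolding Sset_1 by simp
next
  case (Suc v) then show ?case unfolding Sset_Suc[OF Suc(1)] by auto
qed

lemma ncons_inj:
  "inj_on (\<lambda>(a, m). ncons a m) (Sigma {..L} (\<lambda>a. Sset v (L - a)))"
proof (rule inj_onI, clarify)
  fix a m a' m'
  assume m: "m \<in> Sset v (L - a)" and m': "m' \<in> Sset v (L - a')" and e: "ncons a m = ncons a' m'"
  have "a = a'" using fun_cong[OF e, of 1] by (simp add: ncons_def)
  moreover have "m = m'"
  proof
    fix i show "m i = m' i"
    proof (cases i)
      case 0 then show ?thesis using m m' unfolding Sset_def by auto
    next
      case (Suc j) then show ?thesis using fun_cong[OF e, of "Suc i"] by (simp add: ncons_def)
    qed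
  qed
  ultimately show "a = a' \<and> m = m'" by simp
qed

definition gg :: "complex \<Rightarrow> nat \<Rightarrow> (nat \<Rightarrow> nat) \<Rightarrow> complex" where
  "gg q v n = (let N = (\<lambda>i. \<Sum>k=i..v. n k) in
      q ^ ((\<Sum>i=1..v. N i * (N i + 1)) + n v)
      / ((\<Prod>i=1..v-1. qfact q (n i)) * qfact q (1 + 2 * n v))
      * (qpoch (-1) (q ^ 3) (n v) / qpoch (-1) q (n v))
      * (1 + q - q ^ (1 + n v)))"

lemma gg_cons:
  assumes v: "v \<ge> 1"
  shows "gg q (Suc v) (ncons a m) = q ^ ((a + (\<Sum>k=1..v. m k)) * (a + (\<Sum>k=1..v. m k) + 1)) / qfact q a * gg q v m"
proof -
  define N where "N = (\<lambda>i. \<Sum>k=i..v. m k)"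
  define N' where "N' = (\<lambda>i. \<Sum>k=i..Suc v. ncons a m k)"
  have lastv: "ncons a m (Suc v) = m v" using v by (simp add: ncons_Suc)
  have N'1: "N' 1 = a + N 1" unfolding N'_def N_def by (rule sum_ncons)
  have N'S: "N' (Suc i) = N i" if "i \<ge> 1" for i
    unfolding N'_def N_def using sum_ncons_shift[OF that] by simp
  have s1: "(\<Sum>i=1..Suc v. N' i * (N' i + 1)) = N' 1 * (N' 1 + 1) + (\<Sum>i=1..v. N i * (N i + 1))"
  proof -
    have "(\<Sum>i=1..Suc v. N' i * (N' i + 1)) = N' 1 * (N' 1 + 1) + (\<Sum>i=Suc 1..Suc v. N' i * (N' i + 1))"
      by (rule sum.atLeast_Suc_atMost) simp
    also have "(\<Sum>i=Suc 1..Suc v. N' i * (N' i + 1)) = (\<Sum>i=1..v. N' (Suc i) * (N' (Suc i) + 1))"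
      by (rule sum.shift_bounds_cl_Suc_ivl)
    also have "\<dots> = (\<Sum>i=1..v. N i * (N i + 1))"
      by (rule sum.cong) (auto simp: N'S)
    finally show ?thesis .
  qed
  have p1: "(\<Prod>i=1..Suc v - 1. qfact q (ncons a m i)) = qfact q a * (\<Prod>i=1..v-1. qfact q (m i))"
  proof -
    obtain u where u: "v = Suc u" using v by (cases v) auto
    have "(\<Prod>i=1..Suc v - 1. qfact q (ncons a m i)) = (\<Prod>i=1..Suc u. qfact q (ncons a m i))"
      using u by simp
    also have "\<dots> = qfact q (ncons a m 1) * (\<Prod>i=Suc 1..Suc u. qfact q (ncons a m i))"
      by (rule prod.atLeast_Suc_atMost) simp
    also have "(\<Prod>i=Suc 1..Suc u. qfact q (ncons a m i)) = (\<Prod>i=1..u. qfact q (ncons a m (Suc i)))"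
      by (rule prod.shift_bounds_cl_Suc_ivl)
    also have "\<dots> = (\<Prod>i=1..u. qfact q (m i))"
      by (rule prod.cong) (auto simp: ncons_Suc)
    finally show ?thesis using u by (simp add: ncons_def)
  qed
  have "gg q (Suc v) (ncons a m) = q ^ (N' 1 * (N' 1 + 1) + ((\<Sum>i=1..v. N i * (N i + 1)) + m v))
      / (qfact q a * ((\<Prod>i=1..v-1. qfact q (m i)) * qfact q (1 + 2 * m v)))
      * (qpoch (-1) (q ^ 3) (m v) / qpoch (-1) q (m v))
      * (1 + q - q ^ (1 + m v))"
    unfolding gg_def Let_def N'_def[symmetric] s1 p1 lastv by (simp add: add.assoc mult.assoc)
  also have "\<dots> = q ^ (N' 1 * (N' 1 + 1)) / qfact q a * gg q v m"
    unfolding gg_def Let_def N_def[symmetric] by (simp add: power_add ac_simps)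
  finally show ?thesis unfolding N'1 N_def .
qed

lemma qpoch_m1_nz:
  fixes q :: complex
  assumes q: "norm q < 1" shows "qpoch (-1) q m \<noteq> 0"
  by (induction m) (auto simp: qpoch_def onepq_nz[OF q])

lemma gg_1:
  assumes q: "norm q < 1"
  shows "gg q 1 (\<lambda>i. if i = 1 then a else 0) = q ^ (a * (a + 1)) * beta0 q a"
  unfolding gg_def beta0_def Pq_def Let_def
  using qpoch_m1_nz[OF q, of a] qfact_nz[OF q] by (simp add: power_add field_simps)

lemma gg_1':
  assumes q: "norm q < 1"
  shows "gg q (Suc 0) (\<lambda>i. if i = Suc 0 then a else 0) = q ^ (a * (a + 1)) * beta0 q a"
  using gg_1[OF q] by simp

lemma G_lemma:
  assumes q: "norm q < 1"
  shows "(\<Sum>n\<in>Sset (Suc w) L. gg q (Suc w) n * h (\<Sum>k=1..Suc w. n k))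
       = (\<Sum>M\<le>L. q ^ (M * (M + 1)) * betav q w M * h M)"
proof (induction w arbitrary: L h)
  case 0
  have "(\<Sum>n\<in>Sset (Suc 0) L. gg q (Suc 0) n * h (\<Sum>k=1..Suc 0. n k))
      = (\<Sum>a\<le>L. gg q 1 (\<lambda>i. if i = 1 then a else 0) * h a)"
    unfolding One_nat_def[symmetric] Sset_1
    by (subst sum.reindex) (auto simp: inj_on_def fun_eq_iff)
  then show ?case by (simp add: gg_1'[OF q])
next
  case (Suc w)
  define v where "v = Suc w"
  have v1: "v \<ge> 1" by (simp add: v_def)
  have fin: "finite (Sset v x)" for x using Sset_finite[OF v1] .
  have "(\<Sum>n\<in>Sset (Suc v) L. gg q (Suc v) n * h (\<Sum>k=1..Suc v. n k))
      = (\<Sum>(a, m)\<in>Sigma {..L} (\<lambda>a. Sset v (L - a)). gg q (Suc v) (ncons a m) * h (\<Sum>k=1..Suc v. ncons a m k))"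
    unfolding Sset_Suc[OF v1] by (subst sum.reindex[OF ncons_inj]) (simp add: case_prod_beta)
  also have "\<dots> = (\<Sum>a\<le>L. \<Sum>m\<in>Sset v (L - a). gg q (Suc v) (ncons a m) * h (\<Sum>k=1..Suc v. ncons a m k))"
    by (rule sum.Sigma[symmetric]) (auto simp: fin)
  also have "\<dots> = (\<Sum>a\<le>L. 1 / qfact q a * (\<Sum>m\<in>Sset v (L - a). gg q v m *
        (\<lambda>K. q ^ ((a + K) * (a + K + 1)) * h (a + K)) (\<Sum>k=1..v. m k)))"
    unfolding gg_cons[OF v1] sum_ncons by (simp add: sum_distrib_left algebra_simps)
  also have "\<dots> = (\<Sum>a\<le>L. 1 / qfact q a * (\<Sum>K\<le>L - a. q ^ (K * (K + 1)) * betav q w K * (q ^ ((a + K) * (a + K + 1)) * h (a + K))))"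
  proof (rule sum.cong[OF refl])
    fix a assume "a \<in> {..L}"
    have "(\<Sum>m\<in>Sset v (L - a). gg q v m * (\<lambda>K. q ^ ((a + K) * (a + K + 1)) * h (a + K)) (\<Sum>k=1..v. m k))
        = (\<Sum>K\<le>L - a. q ^ (K * (K + 1)) * betav q w K * (\<lambda>K. q ^ ((a + K) * (a + K + 1)) * h (a + K)) K)"
      unfolding v_def by (rule Suc.IH)
    then show "1 / qfact q a * (\<Sum>m\<in>Sset v (L - a). gg q v m * (\<lambda>K. q ^ ((a + K) * (a + K + 1)) * h (a + K)) (\<Sum>k=1..v. m k))
        = 1 / qfact q a * (\<Sum>K\<le>L - a. q ^ (K * (K + 1)) * betav q w K * (q ^ ((a + K) * (a + K + 1)) * h (a + K)))"
      by simp
  qed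
  also have "\<dots> = (\<Sum>a\<le>L. \<Sum>K\<le>L - a. q ^ ((a + K) * (a + K + 1)) * h (a + K) * (q ^ (K * (K + 1)) * betav q w K / qfact q a))"
    by (simp add: sum_distrib_left algebra_simps)
  also have "\<dots> = sum (\<lambda>(a, K). q ^ ((a + K) * (a + K + 1)) * h (a + K) * (q ^ (K * (K + 1)) * betav q w K / qfact q a)) (Sigma {..L} (\<lambda>a. {..L - a}))"
    by (rule sum.Sigma) auto
  also have "Sigma {..L} (\<lambda>a. {..L - a}) = {(a, K). a + K \<le> L}" by auto
  also have "sum (\<lambda>(a, K). q ^ ((a + K) * (a + K + 1)) * h (a + K) * (q ^ (K * (K + 1)) * betav q w K / qfact q a)) {(a, K). a + K \<le> L}
      = (\<Sum>M\<le>L. \<Sum>a\<le>M. q ^ ((a + (M - a)) * (a + (M - a) + 1)) * h (a + (M - a)) * (q ^ ((M - a) * ((M - a) + 1)) * betav q w (M - a) / qfact q a))"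
    by (rule sum.triangle_reindex_eq)
  also have "\<dots> = (\<Sum>M\<le>L. q ^ (M * (M + 1)) * betav q (Suc w) M * h M)"
  proof (rule sum.cong[OF refl])
    fix M assume "M \<in> {..L}"
    have "(\<Sum>a\<le>M. q ^ ((a + (M - a)) * (a + (M - a) + 1)) * h (a + (M - a)) * (q ^ ((M - a) * ((M - a) + 1)) * betav q w (M - a) / qfact q a))
        = (\<Sum>a\<le>M. q ^ (M * (M + 1)) * h M * (q ^ ((M - a) * ((M - a) + 1)) * betav q w (M - a) / qfact q (M - (M - a))))"
      by (rule sum.cong) auto
    also have "\<dots> = (\<Sum>K\<le>M. q ^ (M * (M + 1)) * h M * (q ^ (K * (K + 1)) * betav q w K / qfact q (M - K)))"
      by (rule sum.reindex_bij_witness[of _ "\<lambda>K. M - K" "\<lambda>K. M - K"]) auto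
    also have "\<dots> = q ^ (M * (M + 1)) * betav q (Suc w) M * h M"
      by (simp add: sum_distrib_left algebra_simps)
    finally show "(\<Sum>a\<le>M. q ^ ((a + (M - a)) * (a + (M - a) + 1)) * h (a + (M - a)) * (q ^ ((M - a) * ((M - a) + 1)) * betav q w (M - a) / qfact q a))
        = q ^ (M * (M + 1)) * betav q (Suc w) M * h M" .
  qed
  finally show ?case unfolding v_def .
qed

lemma nat_sub_int: "M \<le> L \<Longrightarrow> nat (int L - int M) = L - M"
  by simp

theorem mainTheorem9:
  fixes v L :: nat and q :: complex
  assumes "v \<ge> 1" and "norm q < 1"
  shows "(\<Sum>\<^sub>\<infinity> n \<in> {n :: nat \<Rightarrow> nat. \<forall>i. i \<notin> {1..v} \<longrightarrow> n i = 0}.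
            (let N = (\<lambda>i. \<Sum>k=i..v. n k) in
              q ^ ((\<Sum>i=1..v. N i * (N i + 1)) + n v)
              / ((\<Prod>i=1..v-1. qfact q (n i)) * qfact q (1 + 2 * n v))
              * (qpoch (-1) (q ^ 3) (n v) / qpoch (-1) q (n v))
              * (qfact q (2 * L + 1) * inv_qfact q (int L - int (N 1)))
              * (1 + q - q ^ (1 + n v))))
       = (\<Sum>\<^sub>\<infinity> j :: int.
            of_int (Legendre j 3)
            * q powi (((2 * int v + 1) * j^2 - (2 * int v + 3) * j) div 2 + 1)
            * qbinom q (2 * int L + 1) (int L + j))"
proof -
  note q = assms(2)
  obtain w where w: "v = Suc w" using assms(1) by (cases v) auto
  define T where "T = {n :: nat \<Rightarrow> nat. \<forall>i. i \<notin> {1..v} \<longrightarrow> n i = 0}"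
  define hh where "hh = (\<lambda>M::nat. qfact q (2 * L + 1) * inv_qfact q (int L - int M))"
  have pt: "(let N = (\<lambda>i. \<Sum>k=i..v. n k) in
              q ^ ((\<Sum>i=1..v. N i * (N i + 1)) + n v)
              / ((\<Prod>i=1..v-1. qfact q (n i)) * qfact q (1 + 2 * n v))
              * (qpoch (-1) (q ^ 3) (n v) / qpoch (-1) q (n v))
              * (qfact q (2 * L + 1) * inv_qfact q (int L - int (N 1)))
              * (1 + q - q ^ (1 + n v))) = gg q v n * hh (\<Sum>k=1..v. n k)" for n
    unfolding gg_def hh_def Let_def by (simp add: ac_simps)
  have "(\<Sum>\<^sub>\<infinity> n \<in> T. gg q v n * hh (\<Sum>k=1..v. n k)) = (\<Sum>\<^sub>\<infinity> n \<in> Sset v L. gg q v n * hh (\<Sum>k=1..v. n k))"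
  proof (rule infsum_cong_neutral)
    fix n assume "n \<in> T - Sset v L"
    then have "(\<Sum>k=1..v. n k) > L" unfolding T_def Sset_def by auto
    then have "int L - int (\<Sum>k=1..v. n k) < 0" by linarith
    then show "gg q v n * hh (\<Sum>k=1..v. n k) = 0" unfolding hh_def inv_qfact_def by (simp only: if_True mult_zero_right)
  qed (auto simp: T_def Sset_def)
  also have "\<dots> = (\<Sum>n\<in>Sset v L. gg q v n * hh (\<Sum>k=1..v. n k))"
    using Sset_finite[OF assms(1)] by simp
  also have "\<dots> = (\<Sum>M\<le>L. q ^ (M * (M + 1)) * betav q w M * hh M)"
    unfolding w by (rule G_lemma[OF q])
  also have "\<dots> = qfact q (2 * L + 1) * betav q v L"
    unfolding w betav.simps hh_def inv_qfact_def
    by (auto simp: sum_distrib_left algebra_simps nat_sub_int intro!: sum.cong)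
  also have "\<dots> = (\<Sum>\<^sub>\<infinity> j :: int.
            of_int (Legendre j 3)
            * q powi (((2 * int v + 1) * j^2 - (2 * int v + 3) * j) div 2 + 1)
            * qbinom q (2 * int L + 1) (int L + j))"
    by (rule rhs_conv[OF q, symmetric])
  finally show ?thesis unfolding pt T_def .
qed

end
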